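(* Let $0<\varepsilon\le 1$, let $A>0$, and let $x_1,\dots,x_k>0$ be item sizes with $\sum_{i=1}^k x_i\le A$ and $k\ge\lceil 1/\varepsilon^2\rceil$. Let $A'$ be the largest number of the form $(1+\varepsilon)^z$, $z\in\mathbb{Z}$, with $A'\le A$. Remove items one at a time in order of non-increasing size (largest first) until the total size of the remaining items is at most $A'$. Then at least $(1-2\varepsilon)k$ items remain. *)

theory Defs
  imports Complex_Main
begin

end

theory Submission
  imports Defs
begin

lemma avg_bound:
  fixes y :: "nat \<Rightarrow> real"
  assumes sorted: "\<And>i j. i \<le> j \<Longrightarrow> j < k \<Longrightarrow> y j \<le> y i" and mk: "m \<le> k"
  shows "real m * (\<Sum>i<k. y i) \<le> real k * (\<Sum>i<m. y i)"
proof (cases "m = 0")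
  case True then show ?thesis by simp
next
  case False
  define c where "c = y (m - 1)"
  have T: "real m * c \<le> (\<Sum>i<m. y i)"
  proof -
    have "(\<Sum>i<m. c) \<le> (\<Sum>i<m. y i)"
      by (rule sum_mono) (use sorted mk False in \<open>auto simp: c_def\<close>)
    then show ?thesis by simp
  qed
  have R: "(\<Sum>i\<in>{m..<k}. y i) \<le> real (k - m) * c"
  proof -
    have "(\<Sum>i\<in>{m..<k}. y i) \<le> (\<Sum>i\<in>{m..<k}. c)"
      by (rule sum_mono) (use sorted mk False in \<open>auto simp: c_def\<close>)
    then show ?thesis by simp
  qed
  have split: "(\<Sum>i<k. y i) = (\<Sum>i<m. y i) + (\<Sum>i\<in>{m..<k}. y i)"
    using mk by (metis atLeast0LessThan sum.atLeastLessThan_concat zero_le)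
  have km: "real k = real m + real (k - m)" using mk by simp
  have "real m * (\<Sum>i\<in>{m..<k}. y i) \<le> real m * (real (k - m) * c)"
    using R by (simp add: mult_left_mono)
  also have "\<dots> = real (k - m) * (real m * c)" by simp
  also have "\<dots> \<le> real (k - m) * (\<Sum>i<m. y i)" using T by (simp add: mult_left_mono)
  finally show ?thesis unfolding split km by (simp add: algebra_simps)
qed

theorem lemma5:
  fixes \<epsilon> A A' :: real and x :: "nat \<Rightarrow> real" and k r :: nat and \<sigma> :: "nat \<Rightarrow> nat"
  assumes eps: "0 < \<epsilon>" "\<epsilon> \<le> 1"
    and Apos: "0 < A"
    and xpos: "\<And>i. i < k \<Longrightarrow> 0 < x i"
    and sumA: "(\<Sum>i<k. x i) \<le> A"
    and kbig: "k \<ge> nat \<lceil>1 / \<epsilon>\<^sup>2\<rceil>"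
    and A'_pow: "\<exists>z::int. A' = (1 + \<epsilon>) powi z"
    and A'_le: "A' \<le> A"
    and A'_max: "\<And>z::int. (1 + \<epsilon>) powi z \<le> A \<Longrightarrow> (1 + \<epsilon>) powi z \<le> A'"
    and \<sigma>_bij: "bij_betw \<sigma> {..<k} {..<k}"
    and \<sigma>_sorted: "\<And>i j. i \<le> j \<Longrightarrow> j < k \<Longrightarrow> x (\<sigma> j) \<le> x (\<sigma> i)"
    and r_le: "r \<le> k"
    and r_stop: "(\<Sum>i\<in>{r..<k}. x (\<sigma> i)) \<le> A'"
    and r_first: "\<And>r'. r' < r \<Longrightarrow> (\<Sum>i\<in>{r'..<k}. x (\<sigma> i)) > A'"
  shows "real k - real r \<ge> (1 - 2 * \<epsilon>) * real k"
proof (cases "r = 0")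
  case True
  have "0 \<le> 2 * \<epsilon> * real k" using eps by simp
  then show ?thesis using True by (simp add: algebra_simps)
next
  case False
  define m where "m = r - 1"
  define y where "y i = x (\<sigma> i)" for i
  define S where "S = (\<Sum>i<k. y i)"
  define T where "T = (\<Sum>i<m. y i)"
  have rm: "r = m + 1" using False m_def by simp
  have mk: "m \<le> k" using r_le rm by simp
  have hm: "(\<Sum>i\<in>{m..<k}. y i) > A'" using r_first[of m] rm y_def by simp
  have split: "S = T + (\<Sum>i\<in>{m..<k}. y i)"
    unfolding S_def T_def using mk by (metis atLeast0LessThan sum.atLeastLessThan_concat zero_le)
  have S_eq: "S = (\<Sum>i<k. x i)"
    unfolding S_def y_def using sum.reindex_bij_betw[OF \<sigma>_bij, of x] by simp
  obtain z :: int where z: "A' = (1 + \<epsilon>) powi z" using A'_pow by blast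
  have "\<not> (1 + \<epsilon>) powi (z + 1) \<le> A"
  proof
    assume "(1 + \<epsilon>) powi (z + 1) \<le> A"
    then have "(1 + \<epsilon>) powi (z + 1) \<le> A'" by (rule A'_max)
    moreover have "(1 + \<epsilon>) powi (z + 1) = (1 + \<epsilon>) * A'"
      using z eps by (simp add: power_int_add)
    moreover have "A' > 0" using z eps by simp
    ultimately show False using eps by (simp add: mult_le_cancel_right1)
  qed
  then have AA': "A < (1 + \<epsilon>) * A'" using z eps by (simp add: power_int_add mult.commute)
  have Spos: "S > 0"
  proof -
    have "A' > 0" using z eps by simp
    have "T \<ge> 0" unfolding T_def y_def
      using \<sigma>_bij mk by (intro sum_nonneg) (auto simp: bij_betw_def intro!: less_imp_le xpos)
    then show ?thesis using split hm \<open>A' > 0\<close> by linarith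
  qed
  have ST: "S < (1 + \<epsilon>) * A'" using AA' sumA S_eq by linarith
  have "T < S - A'" using split hm by linarith
  then have "(1 + \<epsilon>) * T < (1 + \<epsilon>) * (S - A')" using eps
    by (intro mult_strict_left_mono) auto
  then have "(1 + \<epsilon>) * T < (1 + \<epsilon>) * S - (1 + \<epsilon>) * A'"
    by (simp add: algebra_simps)
  with ST have "(1 + \<epsilon>) * T < \<epsilon> * S" by (simp add: algebra_simps)
  moreover have "T \<ge> 0"
    unfolding T_def y_def
    using \<sigma>_bij mk by (intro sum_nonneg) (auto simp: bij_betw_def intro!: less_imp_le xpos)
  ultimately have TS: "T < \<epsilon> * S"
  proof -
    assume a: "(1 + \<epsilon>) * T < \<epsilon> * S" "T \<ge> 0"
    have "0 \<le> \<epsilon> * T" using a eps by simp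
    then show ?thesis using a by (simp add: algebra_simps)
  qed
  have av: "real m * S \<le> real k * T"
    unfolding S_def T_def by (rule avg_bound) (use \<sigma>_sorted mk y_def in auto)
  have "real k * T \<le> real k * (\<epsilon> * S)" using TS by (simp add: mult_left_mono)
  have kpos: "real k > 0" using r_le False by simp
  have "real k * T < real k * (\<epsilon> * S)" using TS kpos by simp
  with av have "real m * S < (real k * \<epsilon>) * S" by (simp add: algebra_simps)
  then have mlt: "real m < real k * \<epsilon>" using Spos by (meson less_le mult_right_less_imp_less)
  have "real k \<ge> 1 / \<epsilon>\<^sup>2" using kbig by linarith
  moreover have "1 / \<epsilon>\<^sup>2 \<ge> 1 / \<epsilon>"
    using eps by (simp add: divide_simps power2_eq_square mult_le_cancel_left1)
  ultimately have "real k \<ge> 1 / \<epsilon>" by linarith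
  then have "real k * \<epsilon> \<ge> 1" using eps by (simp add: divide_simps)
  then show ?thesis using mlt rm by (simp add: algebra_simps)
qed

end
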